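(* Let $\gamma_\sigma=(\{a,b\},\emptyset,\emptyset,\{(a,b,a)\})$ be the GES on two distinct events with no conflicts, no initial causes, and where the occurrence of $b$ adds $a$ as a cause of $a$ (so $\mathrm{Traces}(\gamma_\sigma)=\{\epsilon,a,b,ab\}$). Then there is no SES $\sigma$ with $\mathrm{Traces}(\sigma)=\mathrm{Traces}(\gamma_\sigma)$.
   Context: GES: $\gamma=(E,\#,\to,\lhd)$ with $\#\subseteq E^2$ irreflexive symmetric, $\to\subseteq E^2$, $\lhd\subseteq E^3$ where $(c,m,t)\in\lhd$ means "$m$ adds $c$ as a cause of $t$", requiring $\neg(c\to t)$. $\mathrm{ic}(e)=\{e'\mid e'\to e\}$, $\mathrm{ac}(H,e)=\{e'\mid\exists x\in H.(e',x,e)\in\lhd\}$. For $t=e_1\cdots e_n$, $\overline{t_k}=\{e_1,\ldots,e_k\}$. GES traces: finite sequences of pairwise distinct events, pairwise not in conflict, with $\mathrm{ic}(e_i)\cup\mathrm{ac}(\overline{t_{i-1}},e_i)\subseteq\overline{t_{i-1}}$ for all $i$. SES: $\sigma=(E,\#,\to,\triangleright)$ with $\#\subseteq E^2$ irreflexive symmetric, $\to\subseteq E^2$ a binary relation, $\triangleright\subseteq E^3$ with $(c,d,t)\in\triangleright$ ("$d$ drops cause $c$ of $t$") implying $c\to t$. $\mathrm{dc}(H,e)=\{e'\mid\exists d\in H.(e',d,e)\in\triangleright\}$. SES traces: finite sequences of pairwise distinct events of $E$, pairwise not in conflict, with $\mathrm{ic}(e_i)\setminus\mathrm{dc}(\overline{t_{i-1}},e_i)\subseteq\overline{t_{i-1}}$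 for all $i$. *)

theory Defs
  imports Main
begin

text \<open>A GES is a tuple (E, conf, ic, add): conflict relation, initial causality
and adding relation; (c,m,t) in add means m adds c as a cause of t.\<close>

type_synonym 'e ges = "'e set \<times> ('e \<times> 'e) set \<times> ('e \<times> 'e) set \<times> ('e \<times> 'e \<times> 'e) set"

definition is_GES :: "'e ges \<Rightarrow> bool" where
  "is_GES g \<longleftrightarrow> (case g of (E, C, R, A) \<Rightarrow>
     C \<subseteq> E \<times> E \<and> (\<forall>x. (x, x) \<notin> C) \<and> sym C \<and>
     R \<subseteq> E \<times> E \<and> A \<subseteq> E \<times> E \<times> E \<and>
     (\<forall>c m t. (c, m, t) \<in> A \<longrightarrow> (c, t) \<notin> R))"

definition ic :: "('e \<times> 'e) set \<Rightarrow> 'e \<Rightarrow> 'e set" where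
  "ic R e = {e'. (e', e) \<in> R}"

definition ac :: "('e \<times> 'e \<times> 'e) set \<Rightarrow> 'e set \<Rightarrow> 'e \<Rightarrow> 'e set" where
  "ac A H e = {e'. \<exists>x\<in>H. (e', x, e) \<in> A}"

definition GES_traces :: "'e ges \<Rightarrow> 'e list set" where
  "GES_traces g = (case g of (E, C, R, A) \<Rightarrow>
     {t. distinct t \<and> set t \<subseteq> E \<and>
         (\<forall>i<length t. \<forall>j<length t. (t ! i, t ! j) \<notin> C) \<and>
         (\<forall>i<length t. ic R (t ! i) \<union> ac A (set (take i t)) (t ! i) \<subseteq> set (take i t))})"

text \<open>(c,d,t) in D means d drops cause c of t.\<close>

type_synonym 'e ses = "'e set \<times> ('e \<times> 'e) set \<times> ('e \<times> 'e) set \<times> ('e \<times> 'e \<times> 'e) set"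

definition is_SES :: "'e ses \<Rightarrow> bool" where
  "is_SES s \<longleftrightarrow> (case s of (E, C, R, D) \<Rightarrow>
     C \<subseteq> E \<times> E \<and> (\<forall>x. (x, x) \<notin> C) \<and> sym C \<and>
     R \<subseteq> E \<times> E \<and> D \<subseteq> E \<times> E \<times> E \<and>
     (\<forall>c d t. (c, d, t) \<in> D \<longrightarrow> (c, t) \<in> R))"

definition dc :: "('e \<times> 'e \<times> 'e) set \<Rightarrow> 'e set \<Rightarrow> 'e \<Rightarrow> 'e set" where
  "dc D H e = {e'. \<exists>d\<in>H. (e', d, e) \<in> D}"

definition SES_traces :: "'e ses \<Rightarrow> 'e list set" where
  "SES_traces s = (case s of (E, C, R, D) \<Rightarrow>
     {t. distinct t \<and> set t \<subseteq> E \<and>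
         (\<forall>i<length t. \<forall>j<length t. (t ! i, t ! j) \<notin> C) \<and>
         (\<forall>i<length t. ic R (t ! i) - dc D (set (take i t)) (t ! i) \<subseteq> set (take i t))})"

end

theory Submission
  imports Defs
begin

lemma two_lists:
  assumes "distinct t" "set t \<subseteq> {a, b}"
  shows "t = [] \<or> t = [a] \<or> t = [b] \<or> t = [a, b] \<or> t = [b, a]"
  using assms
  apply (cases t)
   apply simp
  subgoal for x xs
    apply (cases xs)
     apply auto[1]
    subgoal for y ys
      apply (cases ys)
       apply auto[1]
      apply auto
      done
    done
  done

lemma less2: "(i::nat) < 2 \<longleftrightarrow> i = 0 \<or> i = 1" by auto

lemma ges_part:
  assumes "a \<noteq> b"
  shows "GES_traces ({a, b}, {}, {}, {(a, b, a)}) = {[], [a], [b], [a, b]}"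
proof
  show "GES_traces ({a, b}, {}, {}, {(a, b, a)}) \<subseteq> {[], [a], [b], [a, b]}"
  proof
    fix t assume t: "t \<in> GES_traces ({a, b}, {}, {}, {(a, b, a)})"
    then have d: "distinct t" "set t \<subseteq> {a,b}" and
      c: "\<forall>i<length t. ac {(a, b, a)} (set (take i t)) (t ! i) \<subseteq> set (take i t)"
      by (auto simp: GES_traces_def ic_def)
    from two_lists[OF d] have "t = [] \<or> t = [a] \<or> t = [b] \<or> t = [a, b] \<or> t = [b, a]" .
    moreover have "t \<noteq> [b, a]"
    proof
      assume "t = [b, a]"
      then have "1 < length t" by simp
      from c[rule_format, OF this] \<open>t = [b, a]\<close>
      have "ac {(a, b, a)} (set (take 1 [b,a])) ([b,a] ! 1) \<subseteq> set (take 1 [b,a])" by simp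
      then have "ac {(a, b, a)} {b} a \<subseteq> {b}" by simp
      with assms show False by (auto simp: ac_def)
    qed
    ultimately show "t \<in> {[], [a], [b], [a, b]}" by auto
  qed
next
  show "{[], [a], [b], [a, b]} \<subseteq> GES_traces ({a, b}, {}, {}, {(a, b, a)})"
    using assms by (auto simp: GES_traces_def ic_def ac_def less_Suc_eq)
qed

theorem lemma13:
  fixes a b :: 'e
  assumes "a \<noteq> b"
  shows "GES_traces ({a, b}, {}, {}, {(a, b, a)}) = {[], [a], [b], [a, b]}
     \<and> \<not> (\<exists>\<sigma> :: 'e ses. is_SES \<sigma> \<and> SES_traces \<sigma> = GES_traces ({a, b}, {}, {}, {(a, b, a)}))"
proof (intro conjI notI)
  show G: "GES_traces ({a, b}, {}, {}, {(a, b, a)}) = {[], [a], [b], [a, b]}"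
    using ges_part[OF assms] .
  assume "\<exists>\<sigma> :: 'e ses. is_SES \<sigma> \<and> SES_traces \<sigma> = GES_traces ({a, b}, {}, {}, {(a, b, a)})"
  then obtain E C R D where S: "SES_traces (E, C, R, D) = {[], [a], [b], [a, b]}"
    using G by (metis prod_cases4)
  have ta: "[a] \<in> SES_traces (E, C, R, D)" and tb: "[b] \<in> SES_traces (E, C, R, D)"
    and tab: "[a,b] \<in> SES_traces (E, C, R, D)" using S by auto
  from ta have "a \<in> E" "ic R a = {}" by (auto simp: SES_traces_def dc_def)
  moreover from tb have "b \<in> E" "ic R b = {}" by (auto simp: SES_traces_def dc_def)
  moreover from tab have cf: "\<forall>i<2. \<forall>j<2. ([a,b] ! i, [a,b] ! j) \<notin> C"
    by (auto simp: SES_traces_def)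
  have "(a,a) \<notin> C" using cf[rule_format, of 0 0] by simp
  moreover have "(a,b) \<notin> C" using cf[rule_format, of 0 1] by simp
  moreover have "(b,a) \<notin> C" using cf[rule_format, of 1 0] by simp
  moreover have "(b,b) \<notin> C" using cf[rule_format, of 1 1] by simp
  ultimately have "[b,a] \<in> SES_traces (E, C, R, D)"
    using assms unfolding SES_traces_def by (auto simp: less_Suc_eq)
  with S assms show False by auto
qed

end
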